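(* Let $\triangle$ and $\square$ be the scenarios and $e$ the possibilistic model on $\triangle$ described in the context. There is no possibilistic empirical model $d$ on $\square$ and no possibilistic procedure $f\colon\square\to\triangle$ with $\mathrm{Emp}_{\mathbb B}(f)d\le e$. In particular, there is no probabilistic empirical model $d$ on $\square$ and probabilistic procedure $f\colon\square\to\triangle$ such that $\mathrm{Emp}(f)d$ equals the probabilistic model $e$.
   Context: A measurement scenario consists of a finite set of measurements, finite non-empty outcome sets $O_x$, and a simplicial complex of contexts (subsets containing $\emptyset$ and all singletons, closed under subsets); $\mathcal E(U)=\prod_{x\in U}O_x$. A simplicial relation $R$ from $\Sigma$ (on $X$) to $\Delta$ (on $Y$) is a relation $R\subseteq X\times Y$ with $R(\sigma)\in\Delta$ for all $\sigma\in\Sigma$. A deterministic procedure $f\colon S\to T$ is a pair $(\pi_f,\alpha_f)$, $\pi_f$ a simplicial relation from $\Sigma_T$ to $\Sigma_S$, $\alpha_{f,x}\colon\mathcal E_S(\pi_f(x))\to O_{T,x}$; probabilistic procedures are finitely supported probability distributions on deterministic ones, possibilistic procedures are non-empty finite sets of them. Probabilistic/possibilistic empirical models and the actions $\mathrm{Emp}$, $\mathrm{Emp}_{\mathbb B}$: for deterministic $f$, $(\mathrm{Emp}(f)e)_\sigma$ is the push-forward (resp. $(\mathrm{Emp}_{\mathbb B}(f)e)_\sigma$ the image) of $e_{\pi_f(\sigma)}$ along $s\mapsto(\alpha_{f,x}(s|_{\pi_f(x)}))_{x\in\sigma}$, extended by convex combination (resp. contextwise union); possibilistic models are ordered by contextwise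 inclusion. $\triangle$ has measurements $a,b,c$, each with outcomes $\{0,1\}$, and contexts all subsets of size at most $2$. $\square$ has measurements $p,q,r,u$, each with outcomes $\{0,1\}$, and maximal contexts $\{p,q\},\{q,r\},\{r,u\},\{u,p\}$ (so contexts are these, their subsets). The probabilistic model $e$ on $\triangle$ has $e_{\{a,b\}}$ uniform on $\{(0,1),(1,0)\}$, $e_{\{b,c\}}$ uniform on $\{(0,0),(1,1)\}$, $e_{\{a,c\}}$ uniform on $\{(0,0),(1,1)\}$, with uniform marginals on singletons; the possibilistic $e$ is its collection of supports. *)

theory Defs
  imports "HOL-Probability.Probability" "HOL-Library.FuncSet"
begin

text \<open>A scenario is given by a set of measurements X, outcome sets Out x and a set of
contexts Sigma. Joint outcomes on U are the extensional functions in PiE U O.\<close>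

definition poss_model ::
  "'x set \<Rightarrow> ('x \<Rightarrow> 'o set) \<Rightarrow> 'x set set \<Rightarrow> ('x set \<Rightarrow> ('x \<Rightarrow> 'o) set) \<Rightarrow> bool" where
  "poss_model X Out Sig e \<longleftrightarrow>
     (\<forall>\<sigma>\<in>Sig. e \<sigma> \<subseteq> PiE \<sigma> Out \<and> e \<sigma> \<noteq> {}) \<and>
     (\<forall>\<sigma>\<in>Sig. \<forall>\<tau>\<in>Sig. \<tau> \<subseteq> \<sigma> \<longrightarrow> (\<lambda>s. restrict s \<tau>) ` e \<sigma> = e \<tau>)"

definition prob_model ::
  "'x set \<Rightarrow> ('x \<Rightarrow> 'o set) \<Rightarrow> 'x set set \<Rightarrow> ('x set \<Rightarrow> ('x \<Rightarrow> 'o) pmf) \<Rightarrow> bool" where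
  "prob_model X Out Sig e \<longleftrightarrow>
     (\<forall>\<sigma>\<in>Sig. set_pmf (e \<sigma>) \<subseteq> PiE \<sigma> Out) \<and>
     (\<forall>\<sigma>\<in>Sig. \<forall>\<tau>\<in>Sig. \<tau> \<subseteq> \<sigma> \<longrightarrow> map_pmf (\<lambda>s. restrict s \<tau>) (e \<sigma>) = e \<tau>)"

text \<open>A deterministic procedure S \<rightarrow> T: a simplicial relation pi from Sigma_T to Sigma_S
(a relation between measurements of T and of S) together with functions
alpha y : E_S(pi(y)) \<rightarrow> O_T y.\<close>

type_synonym ('y, 'x, 'o, 'p) det_proc = "('y \<times> 'x) set \<times> ('y \<Rightarrow> ('x \<Rightarrow> 'o) \<Rightarrow> 'p)"

definition det_proc ::
  "'x set \<Rightarrow> ('x \<Rightarrow> 'o set) \<Rightarrow> 'x set set \<Rightarrow>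
   'y set \<Rightarrow> ('y \<Rightarrow> 'p set) \<Rightarrow> 'y set set \<Rightarrow> ('y, 'x, 'o, 'p) det_proc \<Rightarrow> bool" where
  "det_proc XS OS SigS XT OT SigT f \<longleftrightarrow>
     fst f \<subseteq> XT \<times> XS \<and>
     (\<forall>\<sigma>\<in>SigT. fst f `` \<sigma> \<in> SigS) \<and>
     (\<forall>y\<in>XT. \<forall>s\<in>PiE (fst f `` {y}) OS. snd f y s \<in> OT y)"

definition proc_map :: "('y, 'x, 'o, 'p) det_proc \<Rightarrow> 'y set \<Rightarrow> ('x \<Rightarrow> 'o) \<Rightarrow> ('y \<Rightarrow> 'p)" where
  "proc_map f \<sigma> s = restrict (\<lambda>y. snd f y (restrict s (fst f `` {y}))) \<sigma>"

definition empB_det :: "('y, 'x, 'o, 'p) det_proc \<Rightarrow> ('x set \<Rightarrow> ('x \<Rightarrow> 'o) set) \<Rightarrow> 'y set \<Rightarrow> ('y \<Rightarrow> 'p) set" where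
  "empB_det f d \<sigma> = proc_map f \<sigma> ` d (fst f `` \<sigma>)"

definition emp_det :: "('y, 'x, 'o, 'p) det_proc \<Rightarrow> ('x set \<Rightarrow> ('x \<Rightarrow> 'o) pmf) \<Rightarrow> 'y set \<Rightarrow> ('y \<Rightarrow> 'p) pmf" where
  "emp_det f d \<sigma> = map_pmf (proc_map f \<sigma>) (d (fst f `` \<sigma>))"

definition poss_proc where
  "poss_proc XS OS SigS XT OT SigT F \<longleftrightarrow>
     F \<noteq> {} \<and> finite F \<and> (\<forall>f\<in>F. det_proc XS OS SigS XT OT SigT f)"

definition empB :: "('y, 'x, 'o, 'p) det_proc set \<Rightarrow> ('x set \<Rightarrow> ('x \<Rightarrow> 'o) set) \<Rightarrow> 'y set \<Rightarrow> ('y \<Rightarrow> 'p) set" where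
  "empB F d \<sigma> = (\<Union>f\<in>F. empB_det f d \<sigma>)"

definition prob_proc where
  "prob_proc XS OS SigS XT OT SigT F \<longleftrightarrow>
     finite (set_pmf F) \<and> (\<forall>f\<in>set_pmf F. det_proc XS OS SigS XT OT SigT f)"

definition emp :: "('y, 'x, 'o, 'p) det_proc pmf \<Rightarrow> ('x set \<Rightarrow> ('x \<Rightarrow> 'o) pmf) \<Rightarrow> 'y set \<Rightarrow> ('y \<Rightarrow> 'p) pmf" where
  "emp F d \<sigma> = bind_pmf F (\<lambda>f. emp_det f d \<sigma>)"

datatype tri = A | B | C
datatype sq = P | Q | R | U

text \<open>Outcomes {0,1} are rendered as bool (False = 0, True = 1).\<close>
definition binO :: "'a \<Rightarrow> bool set" where "binO x = UNIV"

definition triSig :: "tri set set" where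
  "triSig = {\<sigma>. card \<sigma> \<le> 2}"

definition sqSig :: "sq set set" where
  "sqSig = {\<sigma>. \<sigma> \<subseteq> {P, Q} \<or> \<sigma> \<subseteq> {Q, R} \<or> \<sigma> \<subseteq> {R, U} \<or> \<sigma> \<subseteq> {U, P}}"

definition e_poss :: "tri set \<Rightarrow> (tri \<Rightarrow> bool) set" where
  "e_poss \<sigma> = {s \<in> PiE \<sigma> binO.
      (A \<in> \<sigma> \<and> B \<in> \<sigma> \<longrightarrow> s A \<noteq> s B) \<and>
      (B \<in> \<sigma> \<and> C \<in> \<sigma> \<longrightarrow> s B = s C) \<and>
      (A \<in> \<sigma> \<and> C \<in> \<sigma> \<longrightarrow> s A = s C)}"

definition e_prob :: "tri set \<Rightarrow> (tri \<Rightarrow> bool) pmf" where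
  "e_prob \<sigma> = pmf_of_set (e_poss \<sigma>)"

end

theory Submission
  imports Defs
begin

lemma pm_val:
  assumes "y \<in> \<sigma>"
  shows "proc_map f \<sigma> (restrict t (fst f `` \<sigma>)) y = snd f y (restrict t (fst f `` {y}))"
proof -
  have "fst f `` {y} \<subseteq> fst f `` \<sigma>" using assms by blast
  hence "restrict (restrict t (fst f `` \<sigma>)) (fst f `` {y}) = restrict t (fst f `` {y})"
    by (simp add: restrict_restrict Int_absorb1)
  thus ?thesis using assms by (simp add: proc_map_def)
qed

lemma sq_all: "x = P \<or> x = Q \<or> x = R \<or> x = U"
  by (cases x) auto

lemma sq_cover:
  assumes "\<not> (P \<in> W \<and> R \<in> W)" "\<not> (Q \<in> W \<and> U \<in> W)"
  shows "W \<in> sqSig"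
proof -
  have "W \<subseteq> {P,Q} \<or> W \<subseteq> {Q,R} \<or> W \<subseteq> {R,U} \<or> W \<subseteq> {U,P}"
  proof (rule ccontr)
    assume "\<not> ?thesis"
    then obtain a b c d where "a \<in> W" "a \<notin> {P,Q}" "b \<in> W" "b \<notin> {Q,R}"
      "c \<in> W" "c \<notin> {R,U}" "d \<in> W" "d \<notin> {U,P}" by blast
    then show False using assms sq_all[of a] sq_all[of b] sq_all[of c] sq_all[of d] by auto
  qed
  then show ?thesis unfolding sqSig_def by blast
qed

lemma sq_opp1: "S \<in> sqSig \<Longrightarrow> P \<in> S \<Longrightarrow> R \<in> S \<Longrightarrow> False"
  unfolding sqSig_def by auto
lemma sq_opp2: "S \<in> sqSig \<Longrightarrow> Q \<in> S \<Longrightarrow> U \<in> S \<Longrightarrow> False"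
  unfolding sqSig_def by auto

lemma pm_ne: "poss_model X Out S d \<Longrightarrow> \<sigma> \<in> S \<Longrightarrow> d \<sigma> \<noteq> {}"
  unfolding poss_model_def by (drule conjunct1) (drule bspec, assumption, erule conjunct2)

lemma pm_res: "poss_model X Out S d \<Longrightarrow> \<sigma> \<in> S \<Longrightarrow> \<tau> \<in> S \<Longrightarrow> \<tau> \<subseteq> \<sigma> \<Longrightarrow>
   (\<lambda>s. restrict s \<tau>) ` d \<sigma> = d \<tau>"
  unfolding poss_model_def by (drule conjunct2) blast

lemma core:
  assumes df: "det_proc (UNIV::sq set) binO sqSig (UNIV::tri set) binO triSig f"
    and dm: "poss_model (UNIV::sq set) binO sqSig d"
    and h1: "\<And>s. s \<in> empB_det f d {A,B} \<Longrightarrow> s \<in> e_poss {A,B}"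
    and h2: "\<And>s. s \<in> empB_det f d {B,C} \<Longrightarrow> s \<in> e_poss {B,C}"
    and h3: "\<And>s. s \<in> empB_det f d {A,C} \<Longrightarrow> s \<in> e_poss {A,C}"
  shows False
proof -
  have t1: "{A,B} \<in> triSig" "{B,C} \<in> triSig" "{A,C} \<in> triSig" by (auto simp: triSig_def)
  have S1: "fst f `` {A,B} \<in> sqSig" and S2: "fst f `` {B,C} \<in> sqSig"
    and S3: "fst f `` {A,C} \<in> sqSig" using df t1 unfolding det_proc_def by blast+
  define W where "W = fst f `` {A,B,C}"
  have W1: "\<not> (P \<in> W \<and> R \<in> W)"
  proof
    assume "P \<in> W \<and> R \<in> W"
    then obtain x y where x: "x \<in> {A,B,C}" "(x,P) \<in> fst f" and y: "y \<in> {A,B,C}" "(y,R) \<in> fst f"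
      unfolding W_def by blast
    show False using x y S1 S2 S3 sq_opp1 by (cases x; cases y; blast)
  qed
  have W2: "\<not> (Q \<in> W \<and> U \<in> W)"
  proof
    assume "Q \<in> W \<and> U \<in> W"
    then obtain x y where x: "x \<in> {A,B,C}" "(x,Q) \<in> fst f" and y: "y \<in> {A,B,C}" "(y,U) \<in> fst f"
      unfolding W_def by blast
    show False using x y S1 S2 S3 sq_opp2 by (cases x; cases y; blast)
  qed
  have WS: "W \<in> sqSig" using sq_cover W1 W2 by blast
  then obtain t where t: "t \<in> d W" using pm_ne[OF dm] by blast
  have mem: "restrict t (fst f `` \<sigma>) \<in> d (fst f `` \<sigma>)" if "fst f `` \<sigma> \<in> sqSig" "\<sigma> \<subseteq> {A,B,C}" for \<sigma>
  proof -
    have "fst f `` \<sigma> \<subseteq> W" using that unfolding W_def by blast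
    hence "(\<lambda>s. restrict s (fst f `` \<sigma>)) ` d W = d (fst f `` \<sigma>)"
      using pm_res[OF dm WS that(1)] by blast
    thus ?thesis using t by blast
  qed
  define g where "g y = snd f y (restrict t (fst f `` {y}))" for y
  have e: "proc_map f \<sigma> (restrict t (fst f `` \<sigma>)) \<in> empB_det f d \<sigma>"
    if "fst f `` \<sigma> \<in> sqSig" "\<sigma> \<subseteq> {A,B,C}" for \<sigma>
    unfolding empB_det_def using mem[OF that] by blast
  have a1: "proc_map f {A,B} (restrict t (fst f `` {A,B})) \<in> e_poss {A,B}"
    using h1 e[OF S1] by blast
  have a2: "proc_map f {B,C} (restrict t (fst f `` {B,C})) \<in> e_poss {B,C}"
    using h2 e[OF S2] by blast
  have a3: "proc_map f {A,C} (restrict t (fst f `` {A,C})) \<in> e_poss {A,C}"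
    using h3 e[OF S3] by blast
  have "g A \<noteq> g B" using a1 pm_val[of A "{A,B}" f t] pm_val[of B "{A,B}" f t]
    unfolding e_poss_def g_def by auto
  moreover have "g B = g C" using a2 pm_val[of B "{B,C}" f t] pm_val[of C "{B,C}" f t]
    unfolding e_poss_def g_def by auto
  moreover have "g A = g C" using a3 pm_val[of A "{A,C}" f t] pm_val[of C "{A,C}" f t]
    unfolding e_poss_def g_def by auto
  ultimately show False by simp
qed

lemma e_poss_ne:
  "e_poss {A,B} \<noteq> {}" "e_poss {B,C} \<noteq> {}" "e_poss {A,C} \<noteq> {}"
proof -
  have "restrict (\<lambda>x. x = A) {A,B} \<in> e_poss {A,B}" by (simp add: e_poss_def binO_def)
  thus "e_poss {A,B} \<noteq> {}" by blast
  have "restrict (\<lambda>x. True) {B,C} \<in> e_poss {B,C}" by (simp add: e_poss_def binO_def)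
  thus "e_poss {B,C} \<noteq> {}" by blast
  have "restrict (\<lambda>x. True) {A,C} \<in> e_poss {A,C}" by (simp add: e_poss_def binO_def)
  thus "e_poss {A,C} \<noteq> {}" by blast
qed

lemma e_poss_fin: "finite \<sigma> \<Longrightarrow> finite (e_poss \<sigma>)"
  by (rule finite_subset[where B="PiE \<sigma> binO"]) (auto simp: e_poss_def binO_def intro!: finite_PiE)

lemma set_e_prob: "\<sigma> \<in> {{A,B},{B,C},{A,C}} \<Longrightarrow> set_pmf (e_prob \<sigma>) = e_poss \<sigma>"
proof -
  have f: "finite {A,B}" "finite {B,C}" "finite {A,C}" by auto
  assume "\<sigma> \<in> {{A,B},{B,C},{A,C}}"
  then show ?thesis unfolding e_prob_def
    using set_pmf_of_set[OF e_poss_ne(1) e_poss_fin[OF f(1)]]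
      set_pmf_of_set[OF e_poss_ne(2) e_poss_fin[OF f(2)]]
      set_pmf_of_set[OF e_poss_ne(3) e_poss_fin[OF f(3)]] by auto
qed

theorem mainTheorem14:
  shows "(\<nexists>d F. poss_model (UNIV :: sq set) binO sqSig d \<and>
             poss_proc (UNIV :: sq set) binO sqSig (UNIV :: tri set) binO triSig F \<and>
             (\<forall>\<sigma>\<in>triSig. empB F d \<sigma> \<subseteq> e_poss \<sigma>)) \<and>
         (\<nexists>d F. prob_model (UNIV :: sq set) binO sqSig d \<and>
             prob_proc (UNIV :: sq set) binO sqSig (UNIV :: tri set) binO triSig F \<and>
             (\<forall>\<sigma>\<in>triSig. emp F d \<sigma> = e_prob \<sigma>))"
proof (intro conjI notI)
  have t1: "{A,B} \<in> triSig" "{B,C} \<in> triSig" "{A,C} \<in> triSig" by (auto simp: triSig_def)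
  {
    assume "\<exists>d F. poss_model (UNIV :: sq set) binO sqSig d \<and>
             poss_proc (UNIV :: sq set) binO sqSig (UNIV :: tri set) binO triSig F \<and>
             (\<forall>\<sigma>\<in>triSig. empB F d \<sigma> \<subseteq> e_poss \<sigma>)"
    then obtain d F where dm: "poss_model (UNIV :: sq set) binO sqSig d"
      and pp: "poss_proc (UNIV :: sq set) binO sqSig (UNIV :: tri set) binO triSig F"
      and h: "\<forall>\<sigma>\<in>triSig. empB F d \<sigma> \<subseteq> e_poss \<sigma>" by blast
    obtain f where f: "f \<in> F" using pp unfolding poss_proc_def by blast
    have df: "det_proc (UNIV::sq set) binO sqSig (UNIV::tri set) binO triSig f"
      using pp f unfolding poss_proc_def by blast
    show False
      by (rule core[OF df dm]; use h t1 f in \<open>auto simp: empB_def\<close>)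
  }
  {
    assume "\<exists>d F. prob_model (UNIV :: sq set) binO sqSig d \<and>
             prob_proc (UNIV :: sq set) binO sqSig (UNIV :: tri set) binO triSig F \<and>
             (\<forall>\<sigma>\<in>triSig. emp F d \<sigma> = e_prob \<sigma>)"
    then obtain d F where dm: "prob_model (UNIV :: sq set) binO sqSig d"
      and pp: "prob_proc (UNIV :: sq set) binO sqSig (UNIV :: tri set) binO triSig F"
      and h: "\<forall>\<sigma>\<in>triSig. emp F d \<sigma> = e_prob \<sigma>" by blast
    obtain f where f: "f \<in> set_pmf F" using set_pmf_not_empty by fast
    have df: "det_proc (UNIV::sq set) binO sqSig (UNIV::tri set) binO triSig f"
      using pp f unfolding prob_proc_def by blast
    define d' where "d' \<sigma> = set_pmf (d \<sigma>)" for \<sigma>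
    have dm': "poss_model (UNIV :: sq set) binO sqSig d'"
      unfolding poss_model_def d'_def
    proof (intro conjI ballI impI)
      fix \<sigma> assume "\<sigma> \<in> sqSig"
      moreover have "\<forall>\<sigma>\<in>sqSig. set_pmf (d \<sigma>) \<subseteq> PiE \<sigma> binO"
        using dm unfolding prob_model_def by (rule conjunct1)
      ultimately show "set_pmf (d \<sigma>) \<subseteq> PiE \<sigma> binO" by blast
      show "set_pmf (d \<sigma>) \<noteq> {}" by (rule set_pmf_not_empty)
    next
      fix \<sigma> \<tau> assume h: "\<sigma> \<in> sqSig" "\<tau> \<in> sqSig" "\<tau> \<subseteq> \<sigma>"
      have "map_pmf (\<lambda>s. restrict s \<tau>) (d \<sigma>) = d \<tau>"
      proof -
        have "\<forall>\<sigma>\<in>sqSig. \<forall>\<tau>\<in>sqSig. \<tau> \<subseteq> \<sigma> \<longrightarrow> map_pmf (\<lambda>s. restrict s \<tau>) (d \<sigma>) = d \<tau>"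
          using dm unfolding prob_model_def by (rule conjunct2)
        then show ?thesis using h by blast
      qed
      then show "(\<lambda>s. restrict s \<tau>) ` set_pmf (d \<sigma>) = set_pmf (d \<tau>)"
        by (metis set_map_pmf)
    qed
    have sub: "empB_det f d' \<sigma> \<subseteq> set_pmf (emp F d \<sigma>)" for \<sigma>
      using f unfolding empB_det_def emp_def emp_det_def d'_def by auto
    have key: "s \<in> empB_det f d' \<sigma> \<Longrightarrow> \<sigma> \<in> {{A,B},{B,C},{A,C}} \<Longrightarrow> s \<in> e_poss \<sigma>" for s \<sigma>
      using sub[of \<sigma>] h t1 set_e_prob[of \<sigma>] by auto
    show False
      by (rule core[OF df dm']; rule key; simp)
  }
qed

end
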